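(* Let $1\le j\le N-1$, write $x=(x',x'')\in\mathbb{R}^j\times\mathbb{R}^{N-j}$, and let $\Omega=B_R$ be the ball of radius $R$ centered at the origin. Let $g(x',x'')=|x''|$ and let $u_0\in C(\overline\Omega)$ satisfy $u_0>0$ in $\Omega$ and $u_0=g$ on $\partial\Omega$. Let $z$ be the viscosity solution of $\lambda_j(D^2z)=0$ in $\Omega$, $z=g$ on $\partial\Omega$, and $u$ the viscosity solution of $u_t-\lambda_j(D^2u)=0$ in $\Omega\times(0,\infty)$, $u=g$ on $\partial\Omega\times(0,\infty)$, $u(\cdot,0)=u_0$. Then $z=0$ on $\Omega\cap\{x''=0\}$, and for every $x_0\in\Omega\cap\{x''=0\}$ and every $t>0$ one has $u(x_0,t)>0=z(x_0)$.
   Context: $\lambda_j(A)$ is the $j$-th smallest eigenvalue of a symmetric $N\times N$ matrix $A$, $\lambda_j(A)=\inf_{\dim S=j}\sup_{v\in S,|v|=1}\langle Av,v\rangle$. Solutions are viscosity solutions continuous up to the boundary and attaining the data pointwise. *)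

theory Defs
  imports "HOL-Analysis.Analysis"
begin

text \<open>j-th smallest eigenvalue of a (symmetric) matrix, via the Courant--Fischer min-max formula
  lambda_j(A) = inf over j-dimensional subspaces S of sup over unit v in S of (A v, v).\<close>
definition eig_j :: "nat \<Rightarrow> real^'n^'n \<Rightarrow> real" where
  "eig_j j A = Inf {Sup {v \<bullet> (A *v v) | v. v \<in> S \<and> norm v = 1} | S. subspace S \<and> dim S = j}"

definition C2_data :: "(real^'n) set \<Rightarrow> (real^'n \<Rightarrow> real) \<Rightarrow> (real^'n \<Rightarrow> real^'n)
    \<Rightarrow> (real^'n \<Rightarrow> real^'n^'n) \<Rightarrow> bool" where
  "C2_data U \<phi> G H \<longleftrightarrow> open U \<and>
     (\<forall>x\<in>U. (\<phi> has_derivative (\<lambda>h. G x \<bullet> h)) (at x)) \<and>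
     (\<forall>x\<in>U. (G has_derivative (\<lambda>h. H x *v h)) (at x)) \<and>
     continuous_on U H"

definition C21_data :: "((real^'n) \<times> real) set \<Rightarrow> ((real^'n) \<times> real \<Rightarrow> real) \<Rightarrow> ((real^'n) \<times> real \<Rightarrow> real^'n)
    \<Rightarrow> ((real^'n) \<times> real \<Rightarrow> real) \<Rightarrow> ((real^'n) \<times> real \<Rightarrow> real^'n^'n) \<Rightarrow> bool" where
  "C21_data U \<phi> G T H \<longleftrightarrow> open U \<and>
     (\<forall>p\<in>U. (\<phi> has_derivative (\<lambda>(h,s). G p \<bullet> h + T p * s)) (at p)) \<and>
     (\<forall>p\<in>U. ((\<lambda>y. G (y, snd p)) has_derivative (\<lambda>h. H p *v h)) (at (fst p))) \<and>
     continuous_on U G \<and> continuous_on U T \<and> continuous_on U H"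

text \<open>Viscosity solution of lambda_j(D^2 z) = 0 in the open set Omega
  (written as the degenerate elliptic equation -lambda_j(D^2 z) = 0).\<close>
definition visc_sol_ell :: "nat \<Rightarrow> (real^'n) set \<Rightarrow> (real^'n \<Rightarrow> real) \<Rightarrow> bool" where
  "visc_sol_ell j \<Omega> z \<longleftrightarrow> continuous_on \<Omega> z \<and>
     (\<forall>x0\<in>\<Omega>. \<forall>U \<phi> G H. C2_data U \<phi> G H \<and> x0 \<in> U \<and>
        (\<exists>e>0. \<forall>x\<in>\<Omega> \<inter> ball x0 e. z x - \<phi> x \<le> z x0 - \<phi> x0)
        \<longrightarrow> eig_j j (H x0) \<ge> 0) \<and>
     (\<forall>x0\<in>\<Omega>. \<forall>U \<phi> G H. C2_data U \<phi> G H \<and> x0 \<in> U \<and>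
        (\<exists>e>0. \<forall>x\<in>\<Omega> \<inter> ball x0 e. z x - \<phi> x \<ge> z x0 - \<phi> x0)
        \<longrightarrow> eig_j j (H x0) \<le> 0)"

definition visc_sol_par :: "nat \<Rightarrow> ((real^'n) \<times> real) set \<Rightarrow> ((real^'n) \<times> real \<Rightarrow> real) \<Rightarrow> bool" where
  "visc_sol_par j Q u \<longleftrightarrow> continuous_on Q u \<and>
     (\<forall>p0\<in>Q. \<forall>U \<phi> G T H. C21_data U \<phi> G T H \<and> p0 \<in> U \<and>
        (\<exists>e>0. \<forall>p\<in>Q \<inter> ball p0 e. u p - \<phi> p \<le> u p0 - \<phi> p0)
        \<longrightarrow> T p0 - eig_j j (H p0) \<le> 0) \<and>
     (\<forall>p0\<in>Q. \<forall>U \<phi> G T H. C21_data U \<phi> G T H \<and> p0 \<in> U \<and>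
        (\<exists>e>0. \<forall>p\<in>Q \<inter> ball p0 e. u p - \<phi> p \<ge> u p0 - \<phi> p0)
        \<longrightarrow> T p0 - eig_j j (H p0) \<ge> 0)"

text \<open>|x''|: Euclidean norm of the coordinates of x outside the index set J (J = coordinates of x').\<close>
definition norm_out :: "'n set \<Rightarrow> real^'n \<Rightarrow> real" where
  "norm_out J x = sqrt (\<Sum>i\<in>UNIV - J. (x $ i)^2)"

end

theory Submission
  imports Defs
begin


lemma quad_bound:
  fixes A :: "real^'n^'n"
  shows "\<exists>C. \<forall>v. norm v = 1 \<longrightarrow> \<bar>v \<bullet> (A *v v)\<bar> \<le> C"
proof -
  obtain K where K: "\<And>x. norm (A *v x) \<le> norm x * K"
    using bounded_linear.bounded[OF matrix_vector_mul_bounded_linear[of A]] by blast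
  have "\<bar>v \<bullet> (A *v v)\<bar> \<le> K" if "norm v = 1" for v
    using Cauchy_Schwarz_ineq2[of v "A *v v"] K[of v] that by simp
  then show ?thesis by blast
qed

lemma unit_in_subspace:
  fixes S :: "(real^'n) set"
  assumes "subspace S" "dim S \<ge> 1"
  shows "\<exists>v\<in>S. norm v = 1"
proof -
  have "\<not> S \<subseteq> {0}"
  proof
    assume "S \<subseteq> {0}"
    then have "dim S = 0" by (metis dim_eq_0)
    then show False using assms(2) by linarith
  qed
  then obtain w where w: "w \<in> S" "w \<noteq> 0" by blast
  then have "(1/norm w) *\<^sub>R w \<in> S" using assms(1) subspace_scale by blast
  moreover have "norm ((1/norm w) *\<^sub>R w) = 1" using w by simp
  ultimately show ?thesis by blast
qed

lemma eig_j_le: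
  fixes A :: "real^'n^'n"
  assumes "1 \<le> j" "subspace S0" "dim S0 = j"
    and "\<And>v. v \<in> S0 \<Longrightarrow> norm v = 1 \<Longrightarrow> v \<bullet> (A *v v) \<le> m"
  shows "eig_j j A \<le> m"
proof -
  obtain C where C: "\<And>v. norm v = 1 \<Longrightarrow> \<bar>v \<bullet> (A *v v)\<bar> \<le> C"
    using quad_bound[of A] by blast
  define Q where "Q S = {v \<bullet> (A *v v) | v. v \<in> S \<and> norm v = 1}" for S :: "(real^'n) set"
  have bdd: "bdd_above (Q S)" for S
    unfolding Q_def bdd_above_def using C by (fastforce simp: abs_le_iff)
  have ne: "Q S \<noteq> {}" if "subspace S" "dim S = j" for S
    using unit_in_subspace[of S] that assms(1) unfolding Q_def by auto
  have low: "Sup (Q S) \<ge> -C" if SS: "subspace S" "dim S = j" for S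
  proof -
    obtain v where v: "v \<in> S" "norm v = 1" using unit_in_subspace[of S] SS assms(1) by auto
    have "v \<bullet> (A *v v) \<in> Q S" using v unfolding Q_def by auto
    then have "v \<bullet> (A *v v) \<le> Sup (Q S)" using bdd cSup_upper by blast
    moreover have "-C \<le> v \<bullet> (A *v v)" using C[OF v(2)] by (simp add: abs_le_iff)
    ultimately show ?thesis by linarith
  qed
  have "Sup (Q S0) \<le> m"
    using ne[OF assms(2,3)] assms(4) unfolding Q_def by (intro cSup_least) auto
  moreover have "eig_j j A \<le> Sup (Q S0)"
    unfolding eig_j_def Q_def[symmetric]
    apply (rule cInf_lower)
    using assms(2,3) apply blast
    unfolding bdd_below_def using low by blast
  ultimately show ?thesis by linarith
qed

lemma eig_j_ge:
  fixes A :: "real^'n^'n"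
  assumes "1 \<le> j" "j \<le> CARD('n)"
    and "\<And>S. subspace S \<Longrightarrow> dim S = j \<Longrightarrow> \<exists>v\<in>S. norm v = 1 \<and> v \<bullet> (A *v v) \<ge> m"
  shows "eig_j j A \<ge> m"
proof -
  obtain C where C: "\<And>v. norm v = 1 \<Longrightarrow> \<bar>v \<bullet> (A *v v)\<bar> \<le> C"
    using quad_bound[of A] by blast
  define Q where "Q S = {v \<bullet> (A *v v) | v. v \<in> S \<and> norm v = 1}" for S :: "(real^'n) set"
  have bdd: "bdd_above (Q S)" for S
    unfolding Q_def bdd_above_def using C by (fastforce simp: abs_le_iff)
  have "j \<le> dim (UNIV :: (real^'n) set)" using assms(2) by simp
  then obtain T :: "(real^'n) set" where T: "subspace T" "dim T = j"
    using choose_subspace_of_subspace[of j UNIV] by blast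
  show ?thesis
    unfolding eig_j_def Q_def[symmetric]
  proof (rule cInf_greatest)
    show "{Sup (Q S) |S. subspace S \<and> dim S = j} \<noteq> {}" using T by blast
  next
    fix x assume "x \<in> {Sup (Q S) |S. subspace S \<and> dim S = j}"
    then obtain S where S: "subspace S" "dim S = j" "x = Sup (Q S)" by blast
    obtain v where v: "v \<in> S" "norm v = 1" "v \<bullet> (A *v v) \<ge> m" using assms(3)[OF S(1,2)] by blast
    have "v \<bullet> (A *v v) \<in> Q S" using v unfolding Q_def by auto
    then have "v \<bullet> (A *v v) \<le> Sup (Q S)" using bdd cSup_upper by blast
    then show "m \<le> x" using v S by linarith
  qed
qed



definition prj :: "'n set \<Rightarrow> real^'n \<Rightarrow> real^'n" where
  "prj A x = (\<chi> i. if i \<in> A then x$i else 0)"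

definition Mt :: "real \<Rightarrow> real^'n \<Rightarrow> real \<Rightarrow> 'n set \<Rightarrow> real \<Rightarrow> real^'n^'n" where
  "Mt a y b A c = (\<chi> i k. a * y$i * y$k + (if i = k then (if i \<in> A then b else 0) + c else 0))"

lemma prj_linear: "linear (prj A)"
  by (rule linearI) (auto simp: prj_def vec_eq_iff)

lemma prj_bl: "bounded_linear (prj A)"
  using prj_linear linear_conv_bounded_linear by blast

lemma prj_sym: "x \<bullet> prj A h = prj A x \<bullet> h"
  unfolding inner_vec_def prj_def by (intro sum.cong) auto

lemma prj_idem[simp]: "prj A (prj A x) = prj A x"
  by (simp add: prj_def vec_eq_iff)

lemma prj_sq: "v \<bullet> prj A v = (norm (prj A v))^2"
  by (metis power2_norm_eq_inner prj_idem prj_sym)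

lemma norm_prj_le: "norm (prj A v) \<le> norm v"
  unfolding norm_le inner_vec_def prj_def
  by (intro sum_mono) auto

lemma Mt_mult: "Mt a y b A c *v v = (a*(y \<bullet> v)) *\<^sub>R y + b *\<^sub>R prj A v + c *\<^sub>R v"
proof -
  have "(Mt a y b A c *v v) $ i = ((a*(y \<bullet> v)) *\<^sub>R y + b *\<^sub>R prj A v + c *\<^sub>R v) $ i" for i
  proof -
    have "(Mt a y b A c *v v) $ i = (\<Sum>k\<in>UNIV. a * y$i * y$k * v$k
         + (if i = k then ((if i \<in> A then b else 0) + c) * v$k else 0))"
      unfolding Mt_def matrix_vector_mult_def by (auto intro!: sum.cong simp: algebra_simps)
    also have "\<dots> = a * y$i * (\<Sum>k\<in>UNIV. y$k * v$k) + ((if i \<in> A then b else 0) + c) * v$i"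
      by (simp add: sum.distrib sum_distrib_left algebra_simps)
    finally show ?thesis by (simp add: inner_vec_def prj_def algebra_simps)
  qed
  then show ?thesis by (simp add: vec_eq_iff)
qed

lemma Mt_quad: "v \<bullet> (Mt a y b A c *v v) = a*(y \<bullet> v)^2 + b*(norm (prj A v))^2 + c*(norm v)^2"
proof -
  have "v \<bullet> v = (norm v)^2" by (simp add: power2_norm_eq_inner)
  then show ?thesis unfolding Mt_mult by (simp add: inner_add_right prj_sq power2_eq_square inner_commute)
qed

lemma exists_orth:
  fixes S W :: "(real^'n) set"
  assumes "subspace S" "subspace W" "dim W < dim S"
  shows "\<exists>v\<in>S. v \<noteq> 0 \<and> (\<forall>w\<in>W. v \<bullet> w = 0)"
proof -
  define Wp where "Wp = {y \<in> UNIV. \<forall>x \<in> W. orthogonal x y}"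
  have d1: "dim Wp + dim W = dim (UNIV :: (real^'n) set)"
    unfolding Wp_def by (rule dim_subspace_orthogonal_to_vectors) (use assms in auto)
  have sWp: "subspace Wp" unfolding Wp_def using subspace_orthogonal_to_vectors by simp
  have d2: "dim {x + y |x y. x \<in> S \<and> y \<in> Wp} + dim (S \<inter> Wp) = dim S + dim Wp"
    by (rule dim_sums_Int) (use assms sWp in auto)
  have "dim {x + y |x y. x \<in> S \<and> y \<in> Wp} \<le> dim (UNIV :: (real^'n) set)"
    by (rule dim_subset) auto
  then have "dim (S \<inter> Wp) \<noteq> 0" using d1 d2 assms(3) by linarith
  then have "\<not> (S \<inter> Wp \<subseteq> {0})" by (metis dim_eq_0)
  then obtain v where "v \<in> S" "v \<in> Wp" "v \<noteq> 0" by blast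
  then show ?thesis unfolding Wp_def orthogonal_def by (auto simp: inner_commute)
qed



lemma prj_deriv: "(prj A has_derivative prj A) F"
  using prj_bl by (rule bounded_linear_imp_has_derivative)

lemma r_deriv: "((\<lambda>x. x \<bullet> prj A x) has_derivative (\<lambda>h. 2 * (prj A x \<bullet> h))) (at x within S)"
proof -
  have "((\<lambda>x. x \<bullet> prj A x) has_derivative (\<lambda>h. x \<bullet> prj A h + h \<bullet> prj A x)) (at x within S)"
    by (rule has_derivative_inner[OF has_derivative_ident prj_deriv])
  moreover have "(\<lambda>h. x \<bullet> prj A h + h \<bullet> prj A x) = (\<lambda>h. 2 * (prj A x \<bullet> h))"
  proof
    fix h show "x \<bullet> prj A h + h \<bullet> prj A x = 2 * (prj A x \<bullet> h)"
      using prj_sym[of x A h] inner_commute[of h "prj A x"] by simp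
  qed
  ultimately show ?thesis by simp
qed

lemma quad_C2:
  "C2_data UNIV (\<lambda>x. \<alpha> * (x \<bullet> prj A x) + \<gamma> * (x \<bullet> x) + \<kappa>)
     (\<lambda>x. (2*\<alpha>) *\<^sub>R prj A x + (2*\<gamma>) *\<^sub>R x) (\<lambda>x. Mt 0 0 (2*\<alpha>) A (2*\<gamma>))"
  unfolding C2_data_def
proof (intro conjI ballI)
  fix x :: "real^'a"
  have "((\<lambda>x. x \<bullet> prj UNIV x) has_derivative (\<lambda>h. 2 * (prj UNIV x \<bullet> h))) (at x)"
    by (rule r_deriv)
  moreover have "prj UNIV y = y" for y :: "real^'a" by (simp add: prj_def vec_eq_iff)
  ultimately have dx: "((\<lambda>x. x \<bullet> x) has_derivative (\<lambda>h. 2 * (x \<bullet> h))) (at x)" by simp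
  have "((\<lambda>x. \<alpha> * (x \<bullet> prj A x) + \<gamma> * (x \<bullet> x) + \<kappa>) has_derivative
        (\<lambda>h. \<alpha> * (2 * (prj A x \<bullet> h)) + \<gamma> * (2 * (x \<bullet> h)) + 0)) (at x)"
    by (intro has_derivative_add has_derivative_mult_right r_deriv dx has_derivative_const)
  moreover have "(\<lambda>h. \<alpha> * (2 * (prj A x \<bullet> h)) + \<gamma> * (2 * (x \<bullet> h)) + 0)
      = (\<lambda>h. ((2*\<alpha>) *\<^sub>R prj A x + (2*\<gamma>) *\<^sub>R x) \<bullet> h)"
    by (rule ext) (simp add: inner_add_left)
  ultimately show "((\<lambda>x. \<alpha> * (x \<bullet> prj A x) + \<gamma> * (x \<bullet> x) + \<kappa>) has_derivative
        (\<lambda>h. ((2*\<alpha>) *\<^sub>R prj A x + (2*\<gamma>) *\<^sub>R x) \<bullet> h)) (at x)" by simp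
  have "((\<lambda>x. (2*\<alpha>) *\<^sub>R prj A x + (2*\<gamma>) *\<^sub>R x) has_derivative (\<lambda>h. (2*\<alpha>) *\<^sub>R prj A h + (2*\<gamma>) *\<^sub>R h)) (at x)"
    by (intro has_derivative_add has_derivative_scaleR_right prj_deriv has_derivative_ident)
  moreover have "(\<lambda>h. (2*\<alpha>) *\<^sub>R prj A h + (2*\<gamma>) *\<^sub>R h) = (\<lambda>h. Mt 0 0 (2*\<alpha>) A (2*\<gamma>) *v h)"
    by (rule ext) (simp add: Mt_mult)
  ultimately show "((\<lambda>x. (2*\<alpha>) *\<^sub>R prj A x + (2*\<gamma>) *\<^sub>R x) has_derivative (\<lambda>h. Mt 0 0 (2*\<alpha>) A (2*\<gamma>) *v h)) (at x)"
    by simp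
qed auto



lemma prj_cont[continuous_intros]: "continuous_on S f \<Longrightarrow> continuous_on S (\<lambda>x. prj A (f x))"
  using continuous_on_compose[of S f "prj A"] linear_continuous_on[OF prj_bl]
  by (simp add: comp_def) blast

definition rr :: "'n set \<Rightarrow> real^'n \<Rightarrow> real" where "rr J x = x \<bullet> prj J x"

definition psib :: "real \<Rightarrow> real \<Rightarrow> real \<Rightarrow> 'n set \<Rightarrow> (real^'n) \<times> real \<Rightarrow> real" where
  "psib K \<mu> q J p = K * exp (-\<mu> * snd p) * ((rr J (fst p) - q) * (rr J (fst p) - 3*q))"
definition Gb :: "real \<Rightarrow> real \<Rightarrow> real \<Rightarrow> 'n set \<Rightarrow> (real^'n) \<times> real \<Rightarrow> real^'n" where
  "Gb K \<mu> q J p = (K * exp (-\<mu> * snd p) * (4 * rr J (fst p) - 8*q)) *\<^sub>R prj J (fst p)"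
definition Tb :: "real \<Rightarrow> real \<Rightarrow> real \<Rightarrow> 'n set \<Rightarrow> (real^'n) \<times> real \<Rightarrow> real" where
  "Tb K \<mu> q J p = -\<mu> * psib K \<mu> q J p"
definition Hb :: "real \<Rightarrow> real \<Rightarrow> real \<Rightarrow> 'n set \<Rightarrow> (real^'n) \<times> real \<Rightarrow> real^'n^'n" where
  "Hb K \<mu> q J p = Mt (8 * K * exp (-\<mu> * snd p)) (prj J (fst p))
       (K * exp (-\<mu> * snd p) * (4 * rr J (fst p) - 8*q)) J 0"

lemma barrier_C21: "C21_data UNIV (psib K \<mu> q J) (Gb K \<mu> q J) (Tb K \<mu> q J) (Hb K \<mu> q J)"
  unfolding C21_data_def
proof (intro conjI ballI)
  fix p :: "(real^'a) \<times> real"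
  obtain x t where p: "p = (x,t)" by fastforce
  have dr0: "((\<lambda>p. rr J (fst p)) has_derivative (\<lambda>hs. 2 * (prj J (fst p) \<bullet> fst hs))) (at p)"
    unfolding rr_def
    by (rule has_derivative_compose[OF has_derivative_fst[OF has_derivative_ident] r_deriv[of J]])
  then have dr: "((\<lambda>p. rr J (fst p)) has_derivative (\<lambda>hs. 2 * (prj J x \<bullet> fst hs))) (at p)"
    by (simp add: p)
  have de: "((\<lambda>p. exp (-\<mu> * snd p)) has_derivative (\<lambda>hs. (-\<mu> * snd hs) * exp (-\<mu> * t))) (at p)"
  proof -
    have "((\<lambda>p. -\<mu> * snd p) has_derivative (\<lambda>hs. -\<mu> * snd hs)) (at p)"
      by (intro has_derivative_mult_right has_derivative_snd has_derivative_ident)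
    from DERIV_compose_FDERIV[OF DERIV_exp this] show ?thesis by (simp add: p)
  qed
  have d1: "((\<lambda>p. K * (exp (-\<mu> * snd p) * ((rr J (fst p) - q) * (rr J (fst p) - 3*q)))) has_derivative
     (\<lambda>hs. K * (exp (-\<mu> * snd p) * ((rr J (fst p) - q) * (2 * (prj J x \<bullet> fst hs) - 0) + (2 * (prj J x \<bullet> fst hs) - 0) * (rr J (fst p) - 3*q))
        + ((-\<mu> * snd hs) * exp (-\<mu> * t)) * ((rr J (fst p) - q) * (rr J (fst p) - 3*q))))) (at p)"
    by (intro has_derivative_mult_right has_derivative_mult de has_derivative_diff dr has_derivative_const)
  have e1: "psib K \<mu> q J = (\<lambda>p. K * (exp (-\<mu> * snd p) * ((rr J (fst p) - q) * (rr J (fst p) - 3*q))))"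
    by (rule ext) (simp add: psib_def)
  have "(\<lambda>hs. K * (exp (-\<mu> * snd p) * ((rr J (fst p) - q) * (2 * (prj J x \<bullet> fst hs) - 0) + (2 * (prj J x \<bullet> fst hs) - 0) * (rr J (fst p) - 3*q))
        + ((-\<mu> * snd hs) * exp (-\<mu> * t)) * ((rr J (fst p) - q) * (rr J (fst p) - 3*q))))
     = (\<lambda>(h, s). Gb K \<mu> q J p \<bullet> h + Tb K \<mu> q J p * s)"
    by (auto simp: Gb_def Tb_def psib_def p algebra_simps)
  with d1 e1 have "(psib K \<mu> q J has_derivative (\<lambda>(h, s). Gb K \<mu> q J p \<bullet> h + Tb K \<mu> q J p * s)) (at p)"
    by simp
  then show "(psib K \<mu> q J has_derivative (\<lambda>(h, s). Gb K \<mu> q J p \<bullet> h + Tb K \<mu> q J p * s)) (at p)" .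
  have "((\<lambda>y. Gb K \<mu> q J (y, snd p)) has_derivative
     (\<lambda>h. (K * exp (-\<mu> * t) * (4 * (2 * (prj J x \<bullet> h)))) *\<^sub>R prj J x + (K * exp (-\<mu> * t) * (4 * rr J x - 8*q)) *\<^sub>R prj J h)) (at (fst p))"
  proof -
    have dr2: "((\<lambda>y. rr J y) has_derivative (\<lambda>h. 2 * (prj J x \<bullet> h))) (at x)"
      unfolding rr_def by (rule r_deriv)
    have d2: "((\<lambda>y. (K * exp (-\<mu> * t) * (4 * rr J y - 8*q)) *\<^sub>R prj J y) has_derivative
      (\<lambda>h. (K * exp (-\<mu> * t) * (4 * rr J x - 8*q)) *\<^sub>R prj J h + (K * exp (-\<mu> * t) * (4 * (2 * (prj J x \<bullet> h)) - 0)) *\<^sub>R prj J x)) (at x)"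
      by (intro has_derivative_scaleR has_derivative_mult_right has_derivative_diff dr2 prj_deriv has_derivative_const)
    have e: "(\<lambda>y. Gb K \<mu> q J (y, snd p)) = (\<lambda>y. (K * exp (-\<mu> * t) * (4 * rr J y - 8*q)) *\<^sub>R prj J y)"
      by (rule ext) (simp add: Gb_def p)
    have e2: "(\<lambda>h. (K * exp (-\<mu> * t) * (4 * rr J x - 8*q)) *\<^sub>R prj J h + (K * exp (-\<mu> * t) * (4 * (2 * (prj J x \<bullet> h)) - 0)) *\<^sub>R prj J x)
       = (\<lambda>h. (K * exp (-\<mu> * t) * (4 * (2 * (prj J x \<bullet> h)))) *\<^sub>R prj J x + (K * exp (-\<mu> * t) * (4 * rr J x - 8*q)) *\<^sub>R prj J h)"
      by (rule ext) simp
    show ?thesis using d2 unfolding e e2 by (simp add: p)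
  qed
  moreover have "(\<lambda>h. (K * exp (-\<mu> * t) * (4 * (2 * (prj J x \<bullet> h)))) *\<^sub>R prj J x + (K * exp (-\<mu> * t) * (4 * rr J x - 8*q)) *\<^sub>R prj J h) = (\<lambda>h. Hb K \<mu> q J p *v h)"
    by (rule ext) (simp add: Hb_def Mt_mult p algebra_simps)
  ultimately show "((\<lambda>y. Gb K \<mu> q J (y, snd p)) has_derivative (\<lambda>h. Hb K \<mu> q J p *v h)) (at (fst p))"
    by simp
next
  show "continuous_on UNIV (Gb K \<mu> q J)" unfolding Gb_def rr_def
    by (intro continuous_intros)
  show "continuous_on UNIV (Tb K \<mu> q J)" unfolding Tb_def psib_def rr_def
    by (intro continuous_intros)
  show "continuous_on UNIV (Hb K \<mu> q J)" unfolding Hb_def Mt_def rr_def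
    apply (intro continuous_intros)
    subgoal for i k by (cases "i = k"; cases "i \<in> J") (auto intro!: continuous_intros)
    done
qed auto



lemma cont_C2: "C2_data UNIV \<psi> G H \<Longrightarrow> continuous_on S \<psi>"
  unfolding C2_data_def
  by (meson UNIV_I continuous_at_imp_continuous_on has_derivative_continuous)

lemma ell_below:
  fixes z \<psi> :: "real^'n \<Rightarrow> real"
  assumes sol: "visc_sol_ell j (ball 0 R) z" and cz: "continuous_on (cball 0 R) z"
    and C: "C2_data UNIV \<psi> G H" and bd: "\<forall>x\<in>sphere 0 R. \<psi> x \<le> z x"
    and pos: "\<forall>x\<in>ball 0 R. eig_j j (H x) > 0"
  shows "\<forall>x\<in>cball 0 R. \<psi> x \<le> z x"
proof (rule ccontr)
  assume "\<not> (\<forall>x\<in>cball 0 R. \<psi> x \<le> z x)"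
  then obtain x1 where x1: "x1 \<in> cball 0 R" "z x1 < \<psi> x1" by force
  have cf: "continuous_on (cball 0 R) (\<lambda>x. z x - \<psi> x)"
    using cz cont_C2[OF C] by (intro continuous_intros) auto
  obtain xm where xm: "xm \<in> cball 0 R" "\<And>y. y \<in> cball 0 R \<Longrightarrow> z xm - \<psi> xm \<le> z y - \<psi> y"
    using continuous_attains_inf[OF compact_cball _ cf] x1(1) by blast
  have neg: "z xm - \<psi> xm < 0" using xm(2)[OF x1(1)] x1(2) by linarith
  have "xm \<notin> sphere 0 R" using bd neg by force
  then have xb: "xm \<in> ball 0 R" using xm(1) by auto
  have "\<exists>e>0. \<forall>x\<in>ball 0 R \<inter> ball xm e. z x - \<psi> x \<ge> z xm - \<psi> xm"
    using xm(2) by (intro exI[of _ 1]) auto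
  then have "eig_j j (H xm) \<le> 0"
    using sol C xb unfolding visc_sol_ell_def by blast
  then show False using pos xb by force
qed

lemma ell_above:
  fixes z \<psi> :: "real^'n \<Rightarrow> real"
  assumes sol: "visc_sol_ell j (ball 0 R) z" and cz: "continuous_on (cball 0 R) z"
    and C: "C2_data UNIV \<psi> G H" and bd: "\<forall>x\<in>sphere 0 R. z x \<le> \<psi> x"
    and neg: "\<forall>x\<in>ball 0 R. eig_j j (H x) < 0"
  shows "\<forall>x\<in>cball 0 R. z x \<le> \<psi> x"
proof (rule ccontr)
  assume "\<not> (\<forall>x\<in>cball 0 R. z x \<le> \<psi> x)"
  then obtain x1 where x1: "x1 \<in> cball 0 R" "\<psi> x1 < z x1" by force
  have cf: "continuous_on (cball 0 R) (\<lambda>x. z x - \<psi> x)"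
    using cz cont_C2[OF C] by (intro continuous_intros) auto
  obtain xm where xm: "xm \<in> cball 0 R" "\<And>y. y \<in> cball 0 R \<Longrightarrow> z y - \<psi> y \<le> z xm - \<psi> xm"
    using continuous_attains_sup[OF compact_cball _ cf] x1(1) by blast
  have pos: "z xm - \<psi> xm > 0" using xm(2)[OF x1(1)] x1(2) by linarith
  have "xm \<notin> sphere 0 R" using bd pos by force
  then have xb: "xm \<in> ball 0 R" using xm(1) by auto
  have "\<exists>e>0. \<forall>x\<in>ball 0 R \<inter> ball xm e. z x - \<psi> x \<le> z xm - \<psi> xm"
    using xm(2) by (intro exI[of _ 1]) auto
  then have "eig_j j (H xm) \<ge> 0"
    using sol C xb unfolding visc_sol_ell_def by blast
  then show False using neg xb by force
qed



lemma cont_C21: "C21_data UNIV \<psi> G T H \<Longrightarrow> continuous_on S \<psi>"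
  unfolding C21_data_def
  by (meson UNIV_I continuous_at_imp_continuous_on has_derivative_continuous)

lemma shift_C21:
  fixes \<psi> :: "(real^'n) \<times> real \<Rightarrow> real"
  assumes C: "C21_data UNIV \<psi> G T H" and ep: "\<epsilon> > 0"
  shows "C21_data (UNIV \<times> {..<Tm}) (\<lambda>p. \<psi> p - \<epsilon> / (Tm - snd p)) G
           (\<lambda>p. T p - \<epsilon> / (Tm - snd p)^2) H"
  unfolding C21_data_def
proof (intro conjI ballI)
  show "open (UNIV \<times> {..<Tm} :: ((real^'n) \<times> real) set)"
    by (intro open_Times) auto
  fix p :: "(real^'n) \<times> real" assume pU: "p \<in> UNIV \<times> {..<Tm}"
  then have tp: "snd p < Tm" by auto
  have d\<psi>: "(\<psi> has_derivative (\<lambda>(h,s). G p \<bullet> h + T p * s)) (at p)"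
    using C unfolding C21_data_def by blast
  have dd: "((\<lambda>t. \<epsilon> / (Tm - t)) has_real_derivative (\<epsilon> / (Tm - snd p)^2)) (at (snd p))"
    using tp by (auto intro!: derivative_eq_intros simp: power2_eq_square field_simps)
  have ds: "((\<lambda>p. \<epsilon> / (Tm - snd p)) has_derivative (\<lambda>hs. snd hs * (\<epsilon> / (Tm - snd p)^2))) (at p)"
    using DERIV_compose_FDERIV[OF dd has_derivative_snd[OF has_derivative_ident]] by simp
  have "((\<lambda>p. \<psi> p - \<epsilon> / (Tm - snd p)) has_derivative (\<lambda>hs. (\<lambda>(h,s). G p \<bullet> h + T p * s) hs - snd hs * (\<epsilon> / (Tm - snd p)^2))) (at p)"
    by (rule has_derivative_diff[OF d\<psi> ds])
  moreover have "(\<lambda>hs. (\<lambda>(h,s). G p \<bullet> h + T p * s) hs - snd hs * (\<epsilon> / (Tm - snd p)^2))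
     = (\<lambda>(h,s). G p \<bullet> h + (T p - \<epsilon> / (Tm - snd p)^2) * s)"
    by (auto simp: algebra_simps)
  ultimately show "((\<lambda>p. \<psi> p - \<epsilon> / (Tm - snd p)) has_derivative (\<lambda>(h,s). G p \<bullet> h + (T p - \<epsilon> / (Tm - snd p)^2) * s)) (at p)"
    by simp
  show "((\<lambda>y. G (y, snd p)) has_derivative (\<lambda>h. H p *v h)) (at (fst p))"
    using C unfolding C21_data_def by blast
next
  show "continuous_on (UNIV \<times> {..<Tm}) G" "continuous_on (UNIV \<times> {..<Tm}) H"
    using C unfolding C21_data_def by (auto intro: continuous_on_subset)
  have "continuous_on (UNIV \<times> {..<Tm}) T"
    using C unfolding C21_data_def by (auto intro: continuous_on_subset)
  then show "continuous_on (UNIV \<times> {..<Tm}) (\<lambda>p. T p - \<epsilon> / (Tm - snd p)^2)"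
    by (intro continuous_intros) auto
qed

lemma par_comp:
  fixes u \<psi> :: "(real^'n) \<times> real \<Rightarrow> real"
  assumes sol: "visc_sol_par j (ball 0 R \<times> {0<..}) u"
    and cu: "continuous_on (cball 0 R \<times> {0..}) u"
    and C: "C21_data UNIV \<psi> G T H"
    and bd0: "\<forall>x\<in>cball 0 R. \<psi> (x,0) \<le> u (x,0)"
    and bds: "\<forall>x\<in>sphere 0 R. \<forall>t>0. \<psi> (x,t) \<le> u (x,t)"
    and sub: "\<forall>x\<in>ball 0 R. \<forall>t>0. u (x,t) < \<psi> (x,t) \<longrightarrow> T (x,t) - eig_j j (H (x,t)) \<le> 0"
  shows "\<forall>x\<in>cball 0 R. \<forall>t\<ge>0. \<psi> (x,t) \<le> u (x,t)"
proof (rule ccontr)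
  assume "\<not> ?thesis"
  then obtain x1 t1 where x1: "x1 \<in> cball 0 R" "t1 \<ge> 0" "u (x1,t1) < \<psi> (x1,t1)" by force
  define \<delta> where "\<delta> = \<psi> (x1,t1) - u (x1,t1)"
  have \<delta>: "\<delta> > 0" using x1 unfolding \<delta>_def by simp
  define Tm where "Tm = t1 + 1"
  define \<epsilon> where "\<epsilon> = \<delta>/2"
  have ep: "\<epsilon> > 0" using \<delta> unfolding \<epsilon>_def by simp
  define K0 where "K0 = cball (0::real^'n) R \<times> {0..Tm}"
  have cK0: "compact K0" unfolding K0_def by (intro compact_Times) auto
  have cuK0: "continuous_on K0 u" by (rule continuous_on_subset[OF cu]) (auto simp: K0_def)
  have cf0: "continuous_on K0 (\<lambda>p. u p - \<psi> p)"
    using cont_C21[OF C] cuK0 by (intro continuous_intros) auto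
  obtain M0 where M0: "\<And>p. p \<in> K0 \<Longrightarrow> M0 \<le> u p - \<psi> p"
    using continuous_attains_inf[OF cK0 _ cf0] x1 unfolding K0_def Tm_def by fastforce
  define M where "M = \<bar>M0\<bar>"
  have M: "\<And>p. p \<in> K0 \<Longrightarrow> -M \<le> u p - \<psi> p" "M \<ge> 0" using M0 unfolding M_def by force+
  define \<eta> where "\<eta> = min 1 (\<epsilon> / (M+1))"
  have \<eta>: "\<eta> > 0" "\<eta> \<le> 1" "\<eta> \<le> \<epsilon> / (M+1)" using ep M(2) unfolding \<eta>_def by auto
  define F where "F p = u p - \<psi> p + \<epsilon> / (Tm - snd p)" for p
  define K1 where "K1 = cball (0::real^'n) R \<times> {0..Tm - \<eta>}"
  have cK1: "compact K1" unfolding K1_def by (intro compact_Times) auto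
  have p1K1: "(x1,t1) \<in> K1" using x1 \<eta> unfolding K1_def Tm_def by auto
  have cuK1: "continuous_on K1 u" by (rule continuous_on_subset[OF cu]) (auto simp: K1_def)
  have cF: "continuous_on K1 F"
    unfolding F_def
    using cont_C21[OF C] cuK1 \<eta> unfolding K1_def
    by (intro continuous_intros) auto
  obtain pm where pm: "pm \<in> K1" "\<And>p. p \<in> K1 \<Longrightarrow> F pm \<le> F p"
    using continuous_attains_inf[OF cK1 _ cF] p1K1 by blast
  obtain xm tm where pmxt: "pm = (xm,tm)" by fastforce
  have "F (x1,t1) = u (x1,t1) - \<psi> (x1,t1) + \<delta>/2" unfolding F_def \<epsilon>_def Tm_def by simp
  then have Fp1: "F (x1,t1) = -\<delta>/2" unfolding \<delta>_def by (simp add: diff_divide_distrib)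
  have Fneg: "F pm < 0" using pm(2)[OF p1K1] Fp1 \<delta> by linarith
  have xm: "xm \<in> cball 0 R" and tm: "0 \<le> tm" "tm \<le> Tm - \<eta>" using pm(1) unfolding pmxt K1_def by auto
  have pos: "\<epsilon> / (Tm - tm) > 0" using ep tm \<eta> by simp
  have ult: "u (xm,tm) < \<psi> (xm,tm)" using Fneg pos unfolding F_def pmxt by simp
  have tm0: "tm > 0"
  proof (rule ccontr)
    assume "\<not> tm > 0" then have "tm = 0" using tm by simp
    then show False using bd0 xm ult by force
  qed
  have "xm \<notin> sphere 0 R" using bds tm0 ult by force
  then have xmb: "xm \<in> ball 0 R" using xm by auto
  define \<phi> where "\<phi> p = \<psi> p - \<epsilon> / (Tm - snd p)" for p
  have C\<phi>: "C21_data (UNIV \<times> {..<Tm}) \<phi> G (\<lambda>p. T p - \<epsilon> / (Tm - snd p)^2) H"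
    unfolding \<phi>_def by (rule shift_C21[OF C ep])
  have pmU: "pm \<in> UNIV \<times> {..<Tm}" using tm \<eta> unfolding pmxt by auto
  have pmQ: "pm \<in> ball 0 R \<times> {0<..}" using xmb tm0 unfolding pmxt by auto
  have loc: "\<exists>e>0. \<forall>p\<in>(ball 0 R \<times> {0<..}) \<inter> ball pm e. u p - \<phi> p \<ge> u pm - \<phi> pm"
  proof (intro exI[of _ "Tm - tm"] conjI ballI)
    show "Tm - tm > 0" using tm \<eta> by simp
    fix p assume pin: "p \<in> (ball 0 R \<times> {0<..}) \<inter> ball pm (Tm - tm)"
    obtain x t where pxt: "p = (x,t)" by fastforce
    have "dist t tm \<le> dist p pm" using dist_snd_le[of p pm] unfolding pxt pmxt by simp
    then have "dist t tm < Tm - tm" using pin by (simp add: dist_commute)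
    then have tlt: "t < Tm" by (simp add: dist_real_def)
    have xin: "x \<in> ball 0 R" "t > 0" using pin pxt by auto
    have eqF: "u q - \<phi> q = F q" for q unfolding F_def \<phi>_def by simp
    show "u p - \<phi> p \<ge> u pm - \<phi> pm"
    proof (cases "t \<le> Tm - \<eta>")
      case True
      then have "p \<in> K1" using xin unfolding K1_def pxt by auto
      then show ?thesis using pm(2) unfolding eqF by simp
    next
      case False
      then have "p \<in> K0" using xin tlt unfolding K0_def pxt by auto
      then have a: "-M \<le> u p - \<psi> p" using M(1) by blast
      have b: "Tm - t < \<eta>" "Tm - t > 0" using False tlt by auto
      have "\<epsilon> / (Tm - t) \<ge> \<epsilon> / \<eta>"
        using b ep by (intro divide_left_mono) auto
      moreover have "\<epsilon> / \<eta> \<ge> M + 1"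
      proof -
        have "\<eta> * (M+1) \<le> \<epsilon>" using \<eta>(3) M(2) by (simp add: le_divide_eq)
        then show ?thesis using \<eta>(1) by (simp add: le_divide_eq mult.commute)
      qed
      ultimately have "F p \<ge> 1" using a unfolding F_def pxt by simp
      then show ?thesis using Fneg unfolding eqF by simp
    qed
  qed
  have "(\<lambda>p. T p - \<epsilon> / (Tm - snd p)^2) pm - eig_j j (H pm) \<ge> 0"
  proof -
    have all: "\<forall>p0\<in>ball 0 R \<times> {0<..}. \<forall>U \<phi> G T H. C21_data U \<phi> G T H \<and> p0 \<in> U \<and>
        (\<exists>e>0. \<forall>p\<in>(ball 0 R \<times> {0<..}) \<inter> ball p0 e. u p - \<phi> p \<ge> u p0 - \<phi> p0)
        \<longrightarrow> T p0 - eig_j j (H p0) \<ge> 0"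
      using sol unfolding visc_sol_par_def by (elim conjE) assumption
    define T\<phi> where "T\<phi> p = T p - \<epsilon> / (Tm - snd p)^2" for p
    define U where "U = (UNIV \<times> {..<Tm} :: ((real^'n) \<times> real) set)"
    have C': "C21_data U \<phi> G T\<phi> H" using C\<phi> unfolding T\<phi>_def[abs_def] U_def .
    have imp: "C21_data U \<phi> G T\<phi> H \<and> pm \<in> U \<and>
        (\<exists>e>0. \<forall>p\<in>(ball 0 R \<times> {0<..}) \<inter> ball pm e. u p - \<phi> p \<ge> u pm - \<phi> pm)
        \<longrightarrow> T\<phi> pm - eig_j j (H pm) \<ge> 0"
      using all pmQ by blast
    have "T\<phi> pm - eig_j j (H pm) \<ge> 0" using imp C' pmU loc unfolding U_def by blast
    then show ?thesis unfolding T\<phi>_def by simp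
  qed
  moreover have "T pm - eig_j j (H pm) \<le> 0" using sub xmb tm0 ult unfolding pmxt by blast
  moreover have "\<epsilon> / (Tm - snd pm)^2 > 0" using ep tm \<eta> unfolding pmxt by simp
  ultimately show False by simp
qed



lemma prj_zero[simp]: "prj A 0 = 0" by (simp add: prj_def vec_eq_iff)
lemma prj_empty[simp]: "prj {} x = 0" by (simp add: prj_def vec_eq_iff)
lemma prj_add: "prj A (x + y) = prj A x + prj A y" by (simp add: prj_def vec_eq_iff)
lemma prj_scale: "prj A (c *\<^sub>R x) = c *\<^sub>R prj A x" by (simp add: prj_def vec_eq_iff)
lemma prj_diff: "prj A (x - y) = prj A x - prj A y" by (simp add: prj_def vec_eq_iff)

definition EJ :: "'n set \<Rightarrow> (real^'n) set" where "EJ J = {x. \<forall>i. i \<notin> J \<longrightarrow> x$i = 0}"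

lemma EJ_sub: "subspace (EJ J)"
proof -
  have "vec.subspace (EJ J)" unfolding EJ_def by (rule subspace_substandard_cart)
  then show ?thesis by (simp add: subspace_vec_eq)
qed

lemma EJ_dim: "dim (EJ J) = card J"
proof -
  have "vec.dim (EJ J) = card J" unfolding EJ_def by (rule dim_substandard_cart)
  then show ?thesis by (simp add: dim_vec_eq)
qed

lemma EJ_prj: "x \<in> EJ J \<longleftrightarrow> prj J x = x"
  unfolding EJ_def prj_def by (auto simp: vec_eq_iff)

lemma eig_pos_id:
  fixes c :: real
  assumes "1 \<le> j" "j \<le> CARD('n::finite)"
  shows "eig_j j (Mt 0 (0::real^'n) b {} c) \<ge> c"
proof (rule eig_j_ge[OF assms])
  fix S :: "(real^'n) set" assume S: "subspace S" "dim S = j"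
  obtain v where "v \<in> S" "norm v = 1" using unit_in_subspace[OF S(1)] S(2) assms(1) by auto
  then show "\<exists>v\<in>S. norm v = 1 \<and> c \<le> v \<bullet> (Mt 0 0 b {} c *v v)" by (auto simp: Mt_quad)
qed

lemma eig_neg_w:
  fixes J :: "'n::finite set"
  assumes "1 \<le> card J"
  shows "eig_j (card J) (Mt 0 (0::real^'n) a (-J) c) \<le> c"
proof (rule eig_j_le[OF assms EJ_sub EJ_dim])
  fix v assume v: "v \<in> EJ J" "norm (v::real^'n) = 1"
  have "prj (-J) v = 0" using v(1) unfolding EJ_def prj_def by (auto simp: vec_eq_iff)
  then show "v \<bullet> (Mt 0 0 a (- J) c *v v) \<le> c" using v(2) by (simp add: Mt_quad)
qed

lemma eig_barrier:
  fixes J :: "'n::finite set" and y :: "real^'n"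
  assumes j1: "1 \<le> card J" and jN: "card J \<le> CARD('n)" and c: "c > 0" and y: "prj J y = y"
  shows "eig_j (card J) (Mt (8*c) y (c*(4*(y \<bullet> y) - 8*q)) J 0) \<ge> c * min (12*(y \<bullet> y) - 8*q) 0"
proof (rule eig_j_ge[OF j1 jN])
  fix S :: "(real^'n) set" assume S: "subspace S" "dim S = card J"
  define r where "r = y \<bullet> y"
  define m where "m = 12*r - 8*q"
  have key: "v \<bullet> (Mt (8*c) y (c*(4*r - 8*q)) J 0 *v v) \<ge> c * min m 0"
    if v1: "norm v = 1" and vv: "(y \<bullet> v)^2 = r * (norm (prj J v))^2" for v
  proof -
    have "v \<bullet> (Mt (8*c) y (c*(4*r - 8*q)) J 0 *v v) = c * (norm (prj J v))^2 * m"
      unfolding Mt_quad vv m_def by (simp add: algebra_simps)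
    moreover have "(norm (prj J v))^2 \<le> 1" using norm_prj_le[of J v] v1
      by (metis norm_ge_zero power_le_one)
    moreover have "min m 0 \<le> (norm (prj J v))^2 * m"
    proof (cases "m \<ge> 0")
      case True then show ?thesis by simp
    next
      case False
      have "(norm (prj J v))^2 * m \<ge> 1 * m"
        using False \<open>(norm (prj J v))^2 \<le> 1\<close> by (intro mult_right_mono_neg) auto
      then show ?thesis by simp
    qed
    ultimately show ?thesis using c by (simp add: mult.assoc mult_left_mono)
  qed
  show "\<exists>v\<in>S. norm v = 1 \<and> c * min (12 * (y \<bullet> y) - 8 * q) 0 \<le> v \<bullet> (Mt (8 * c) y (c * (4 * (y \<bullet> y) - 8 * q)) J 0 *v v)"
  proof (cases "y = 0")
    case True
    obtain v where v: "v \<in> S" "norm v = 1" using unit_in_subspace[OF S(1)] S(2) j1 by auto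
    have "(y \<bullet> v)^2 = r * (norm (prj J v))^2" using True unfolding r_def by simp
    then show ?thesis using key[OF v(2)] v unfolding r_def m_def by blast
  next
    case False
    define W where "W = {w. prj J w = w \<and> y \<bullet> w = 0}"
    have sW: "subspace W" unfolding W_def subspace_def
      by (auto simp: prj_add prj_scale inner_add_right)
    have WE: "W \<subset> EJ J"
    proof
      show "W \<subseteq> EJ J" unfolding W_def using EJ_prj by auto
      have "y \<in> EJ J" using y EJ_prj by auto
      moreover have "y \<notin> W" using False unfolding W_def by auto
      ultimately show "W \<noteq> EJ J" by blast
    qed
    have "dim W < dim (EJ J)"
    proof -
      have e: "span W = W" "span (EJ J) = EJ J" using sW EJ_sub span_eq_iff by blast+
      have "span W \<subset> span (EJ J)" unfolding e by (rule WE)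
      then show ?thesis by (rule dim_psubset)
    qed
    then have dW: "dim W < dim S" using S(2) EJ_dim[of J] by linarith
    obtain v0 where v0: "v0 \<in> S" "v0 \<noteq> 0" "\<forall>w\<in>W. v0 \<bullet> w = 0"
      using exists_orth[OF S(1) sW dW] by blast
    define v where "v = (1/norm v0) *\<^sub>R v0"
    have vS: "v \<in> S" unfolding v_def using v0(1) S(1) subspace_scale by blast
    have v1: "norm v = 1" unfolding v_def using v0(2) by simp
    have vW: "\<forall>w\<in>W. v \<bullet> w = 0" unfolding v_def using v0(3) by simp
    have r0: "r \<noteq> 0" using False unfolding r_def by simp
    define w0 where "w0 = prj J v - ((y \<bullet> v)/r) *\<^sub>R y"
    have yv: "y \<bullet> prj J v = y \<bullet> v" using prj_sym[of y J v] y by simp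
    have "w0 \<in> W" unfolding W_def w0_def
      using y r0 yv by (auto simp: prj_diff prj_scale inner_diff_right r_def)
    then have "v \<bullet> w0 = 0" using vW by blast
    then have "v \<bullet> prj J v - (y \<bullet> v)/r * (v \<bullet> y) = 0"
      unfolding w0_def by (simp add: inner_diff_right)
    then have "(norm (prj J v))^2 - (y \<bullet> v)^2 / r = 0"
      by (simp add: prj_sq inner_commute power2_eq_square)
    then have "(y \<bullet> v)^2 = r * (norm (prj J v))^2" using r0 by (simp add: field_simps)
    then show ?thesis using key[OF v1] vS v1 unfolding r_def m_def by blast
  qed
qed



lemma prj_split: "prj J x + prj (-J) x = x" by (simp add: prj_def vec_eq_iff)

lemma rr_split: "x \<bullet> x = rr J x + x \<bullet> prj (-J) x"
proof -
  have "x \<bullet> x = x \<bullet> (prj J x + prj (-J) x)" by (simp add: prj_split)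
  then show ?thesis by (simp add: rr_def inner_add_right)
qed

lemma rr_nonneg: "rr J x \<ge> 0" by (simp add: rr_def prj_sq)
lemma prjq_nonneg: "x \<bullet> prj A x \<ge> 0" by (simp add: prj_sq)

lemma norm_out_eq: "norm_out J x = sqrt (x \<bullet> prj (-J) x)"
proof -
  have "x \<bullet> prj (-J) x = (\<Sum>i\<in>UNIV. if i \<in> UNIV - J then (x$i)^2 else 0)"
    unfolding inner_vec_def prj_def by (intro sum.cong) (auto simp: power2_eq_square)
  also have "\<dots> = (\<Sum>i\<in>UNIV - J. (x$i)^2)"
    by (simp add: sum.If_cases set_diff_eq)
  finally show ?thesis unfolding norm_out_def by simp
qed

lemma xx_ball: "x \<in> ball 0 R \<Longrightarrow> x \<bullet> x < R^2"
  by (simp add: dot_square_norm power_strict_mono)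
lemma xx_sphere: "x \<in> sphere 0 R \<Longrightarrow> x \<bullet> x = R^2"
  by (simp add: dot_square_norm)

lemma z_nonneg:
  fixes z :: "real^'n::finite \<Rightarrow> real" and J :: "'n set"
  assumes R: "R > 0" and j: "1 \<le> j" "j \<le> CARD('n)"
    and sol: "visc_sol_ell j (ball 0 R) z" and cz: "continuous_on (cball 0 R) z"
    and bz: "\<forall>x\<in>sphere 0 R. z x = norm_out J x"
  shows "\<forall>x\<in>cball 0 R. z x \<ge> 0"
proof (intro ballI)
  fix x assume x: "x \<in> cball (0::real^'n) R"
  have main: "\<epsilon> * (x \<bullet> x) + (-\<epsilon>*R^2) \<le> z x" if ep: "\<epsilon> > 0" for \<epsilon>
  proof -
    have C: "C2_data UNIV (\<lambda>x. 0 * (x \<bullet> prj {} x) + \<epsilon> * (x \<bullet> x) + (-\<epsilon>*R^2))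
       (\<lambda>x. (2*0) *\<^sub>R prj {} x + (2*\<epsilon>) *\<^sub>R x) (\<lambda>x. Mt 0 0 (2*0) {} (2*\<epsilon>))"
      by (rule quad_C2)
    have "\<forall>x\<in>cball 0 R. 0 * (x \<bullet> prj {} x) + \<epsilon> * (x \<bullet> x) + (-\<epsilon>*R^2) \<le> z x"
    proof (rule ell_below[OF sol cz C])
      show "\<forall>x\<in>sphere 0 R. 0 * (x \<bullet> prj {} x) + \<epsilon> * (x \<bullet> x) + - \<epsilon> * R\<^sup>2 \<le> z x"
      proof
        fix y assume ys: "y \<in> sphere (0::real^'n) R"
        have "0 * (y \<bullet> prj {} y) + \<epsilon> * (y \<bullet> y) + - \<epsilon> * R\<^sup>2 = 0" using xx_sphere[OF ys] by simp
        moreover have "z y \<ge> 0" using bz ys by (simp add: norm_out_eq prjq_nonneg)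
        ultimately show "0 * (y \<bullet> prj {} y) + \<epsilon> * (y \<bullet> y) + - \<epsilon> * R\<^sup>2 \<le> z y" by linarith
      qed
      show "\<forall>x\<in>ball (0::real^'n) R. 0 < eig_j j (Mt 0 (0::real^'n) (2 * 0) {} (2 * \<epsilon>))"
      proof
        fix y assume "y \<in> ball (0::real^'n) R"
        have e: "eig_j j (Mt 0 (0::real^'n) (2*0) {} (2*\<epsilon>)) \<ge> 2*\<epsilon>" by (rule eig_pos_id[OF j])
        then show "0 < eig_j j (Mt 0 (0::real^'n) (2 * 0) {} (2 * \<epsilon>))" using ep by linarith
      qed
    qed
    then show ?thesis using x by simp
  qed
  show "z x \<ge> 0"
  proof (rule ccontr)
    assume neg: "\<not> z x \<ge> 0"
    define \<epsilon> where "\<epsilon> = - z x / (2 * R^2)"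
    have ep: "\<epsilon> > 0" using neg R unfolding \<epsilon>_def by (intro divide_pos_pos) auto
    have "\<epsilon> * (x \<bullet> x) \<ge> 0" using ep by simp
    then have "-\<epsilon>*R^2 \<le> z x" using main[OF ep] by linarith
    moreover have "-\<epsilon>*R^2 = z x / 2" unfolding \<epsilon>_def using R by (simp add: field_simps)
    ultimately show False using neg by linarith
  qed
qed

lemma z_le0:
  fixes z :: "real^'n::finite \<Rightarrow> real" and J :: "'n set"
  assumes R: "R > 0" and j: "1 \<le> card J"
    and sol: "visc_sol_ell (card J) (ball 0 R) z" and cz: "continuous_on (cball 0 R) z"
    and bz: "\<forall>x\<in>sphere 0 R. z x = norm_out J x"
    and x0: "x0 \<in> ball 0 R" "norm_out J x0 = 0"
  shows "z x0 \<le> 0"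
proof -
  have main: "z x0 \<le> b * R^2 + \<delta>" if b: "b > 0" and d: "\<delta> > 0" for b \<delta>
  proof -
    define a where "a = 1 / (4*\<delta>)"
    have C: "C2_data UNIV (\<lambda>x. a * (x \<bullet> prj (-J) x) + (-b) * (x \<bullet> x) + (b*R^2 + \<delta>))
       (\<lambda>x. (2*a) *\<^sub>R prj (-J) x + (2*(-b)) *\<^sub>R x) (\<lambda>x. Mt 0 0 (2*a) (-J) (2*(-b)))"
      by (rule quad_C2)
    have "\<forall>x\<in>cball 0 R. z x \<le> a * (x \<bullet> prj (-J) x) + (-b) * (x \<bullet> x) + (b*R^2 + \<delta>)"
    proof (rule ell_above[OF sol cz C])
      show "\<forall>x\<in>sphere 0 R. z x \<le> a * (x \<bullet> prj (-J) x) + (-b) * (x \<bullet> x) + (b*R^2 + \<delta>)"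
      proof
        fix x assume xs: "x \<in> sphere (0::real^'n) R"
        define s where "s = sqrt (x \<bullet> prj (-J) x)"
        have s2: "s^2 = x \<bullet> prj (-J) x" unfolding s_def using prjq_nonneg by simp
        have "0 \<le> (s - 2*\<delta>)^2 / (4*\<delta>)" using d by simp
        also have "(s - 2*\<delta>)^2 / (4*\<delta>) = a * s^2 + \<delta> - s"
          unfolding a_def using d by (simp add: field_simps power2_eq_square)
        finally have "s \<le> a * s^2 + \<delta>" by simp
        then show "z x \<le> a * (x \<bullet> prj (-J) x) + (-b) * (x \<bullet> x) + (b*R^2 + \<delta>)"
        proof -
          have "z x = s" using bz xs unfolding norm_out_eq s_def by simp
          then show ?thesis using \<open>s \<le> a * s^2 + \<delta>\<close> xx_sphere[OF xs] by (simp add: s2[symmetric])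
        qed
      qed
      show "\<forall>x\<in>ball (0::real^'n) R. eig_j (card J) (Mt 0 (0::real^'n) (2 * a) (- J) (2 * - b)) < 0"
      proof
        have "eig_j (card J) (Mt 0 (0::real^'n) (2 * a) (- J) (2 * - b)) \<le> 2 * - b" by (rule eig_neg_w[OF j])
        then show "eig_j (card J) (Mt 0 (0::real^'n) (2 * a) (- J) (2 * - b)) < 0" using b by linarith
      qed
    qed
    then have "z x0 \<le> a * (x0 \<bullet> prj (-J) x0) + (-b) * (x0 \<bullet> x0) + (b*R^2 + \<delta>)"
      using x0(1) by auto
    moreover have "x0 \<bullet> prj (-J) x0 = 0" using x0(2) prjq_nonneg[of x0 "-J"] unfolding norm_out_eq by simp
    moreover have "b * (x0 \<bullet> x0) \<ge> 0" using b by simp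
    ultimately show ?thesis by simp
  qed
  show ?thesis
  proof (rule ccontr)
    assume pos: "\<not> z x0 \<le> 0"
    have "z x0 \<le> (z x0 / (4*R^2)) * R^2 + z x0 / 4"
      using pos R by (intro main) auto
    also have "\<dots> = z x0 / 2" using R by (simp add: field_simps)
    finally show False using pos by linarith
  qed
qed



lemma u_nonneg:
  fixes u :: "(real^'n::finite) \<times> real \<Rightarrow> real" and J :: "'n set"
  assumes j1: "1 \<le> card J" and jN: "card J \<le> CARD('n)"
    and sol: "visc_sol_par (card J) (ball 0 R \<times> {0<..}) u"
    and cu: "continuous_on (cball 0 R \<times> {0..}) u"
    and b0: "\<forall>x\<in>cball 0 R. u (x,0) \<ge> 0"
    and bs: "\<forall>x\<in>sphere 0 R. \<forall>t>0. u (x, t) = norm_out J x"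
  shows "\<forall>x\<in>cball 0 R. \<forall>t\<ge>0. psib 0 1 1 J (x,t) \<le> u (x,t)"
proof (rule par_comp[OF sol cu barrier_C21])
  show "\<forall>x\<in>cball 0 R. psib 0 1 1 J (x, 0) \<le> u (x, 0)" using b0 by (simp add: psib_def)
  show "\<forall>x\<in>sphere 0 R. \<forall>t>0. psib 0 1 1 J (x, t) \<le> u (x, t)" using bs by (simp add: psib_def norm_out_eq prjq_nonneg)
  show "\<forall>x\<in>ball 0 R. \<forall>t>0. u (x, t) < psib 0 1 1 J (x, t) \<longrightarrow> Tb 0 1 1 J (x, t) - eig_j (card J) (Hb 0 1 1 J (x, t)) \<le> 0"
  proof (intro ballI allI impI)
    fix x t
    have "eig_j (card J) (Hb 0 1 1 J (x, t)) \<ge> 0"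
    proof (rule eig_j_ge[OF j1 jN])
      fix S :: "(real^'n) set" assume S: "subspace S" "dim S = card J"
      obtain v where "v \<in> S" "norm v = 1" using unit_in_subspace[OF S(1)] S(2) j1 by auto
      then show "\<exists>v\<in>S. norm v = 1 \<and> 0 \<le> v \<bullet> (Hb 0 1 1 J (x, t) *v v)"
        by (auto simp: Hb_def Mt_quad)
    qed
    then show "Tb 0 1 1 J (x, t) - eig_j (card J) (Hb 0 1 1 J (x, t)) \<le> 0"
      by (simp add: Tb_def psib_def)
  qed
qed

lemma arith_barrier:
  fixes q r :: real
  assumes q: "q > 0" and r: "r < q"
  shows "-(12/q) * ((r - q) * (r - 3*q)) \<le> min (12*r - 8*q) 0"
proof -
  have P: "(r - q) * (r - 3*q) > 0" using q r by (intro mult_neg_neg) auto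
  have "12 * ((r - q) * (r - 3*q)) - (8*q - 12*r) * q = 4 * (3 * (r - 3/2*q)^2 + q^2/4)"
    by (simp add: algebra_simps power2_eq_square)
  also have "\<dots> \<ge> 0" by simp
  finally have "12 * ((r - q) * (r - 3*q)) \<ge> (8*q - 12*r) * q" by linarith
  then have "(12/q) * ((r - q) * (r - 3*q)) \<ge> 8*q - 12*r" using q
    by (simp add: field_simps)
  moreover have "(12/q) * ((r - q) * (r - 3*q)) \<ge> 0" using P q by simp
  ultimately show ?thesis by simp
qed

lemma rr_cont[continuous_intros]: "continuous_on S (rr J)"
  unfolding rr_def by (intro continuous_intros)

lemma u_pos:
  fixes u :: "(real^'n::finite) \<times> real \<Rightarrow> real" and J :: "'n set" and u0 :: "real^'n \<Rightarrow> real"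
  assumes j1: "1 \<le> card J" and jN: "card J \<le> CARD('n)" and R: "R > 0"
    and sol: "visc_sol_par (card J) (ball 0 R \<times> {0<..}) u"
    and cu: "continuous_on (cball 0 R \<times> {0..}) u"
    and cu0: "continuous_on (cball 0 R) u0"
    and u0p: "\<forall>x\<in>ball 0 R. u0 x > 0"
    and u0s: "\<forall>x\<in>sphere 0 R. u0 x = norm_out J x"
    and bs: "\<forall>x\<in>sphere 0 R. \<forall>t>0. u (x, t) = norm_out J x"
    and b0: "\<forall>x\<in>cball 0 R. u (x,0) = u0 x"
    and unn: "\<forall>x\<in>cball 0 R. \<forall>t\<ge>0. 0 \<le> u (x,t)"
    and x0: "x0 \<in> ball 0 R" "norm_out J x0 = 0" and t0: "t0 > 0"
  shows "u (x0, t0) > 0"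
proof -
  have u0nn: "u0 x \<ge> 0" if "x \<in> cball (0::real^'n) R" for x
  proof (cases "x \<in> ball 0 R")
    case True then show ?thesis using u0p less_imp_le by blast
  next
    case False then have "x \<in> sphere 0 R" using that by auto
    then show ?thesis using u0s by (simp add: norm_out_eq prjq_nonneg)
  qed
  have x0p: "x0 \<bullet> prj (-J) x0 = 0" using x0(2) prjq_nonneg[of x0 "-J"] unfolding norm_out_eq by simp
  define r0 where "r0 = rr J x0"
  have r0: "r0 = x0 \<bullet> x0" using rr_split[of x0 J] x0p unfolding r0_def by simp
  have r0R: "r0 < R^2" "r0 \<ge> 0" using xx_ball[OF x0(1)] r0 rr_nonneg unfolding r0_def by auto
  define q where "q = (r0 + R^2)/2"
  have q: "q > 0" "r0 < q" "q < R^2" "R^2 \<le> 2*q" using r0R R unfolding q_def by (auto simp: power2_eq_square)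
  define \<mu> where "\<mu> = 12/q"
  define P where "P r = (r - q) * (r - 3*q)" for r
  have Ple: "P r \<le> 3*q^2" "P r \<ge> 0" if "0 \<le> r" "r \<le> q" for r
  proof -
    have "(q - r) * (3*q - r) \<le> q * (3*q)" using that q by (intro mult_mono) auto
    moreover have "(q - r) * (3*q - r) \<ge> 0" using that q by simp
    ultimately show "P r \<le> 3*q^2" "P r \<ge> 0" unfolding P_def by (simp_all add: algebra_simps power2_eq_square)
  qed
  have Pneg: "P r < 0" if "q < r" "r < 3*q" for r
    unfolding P_def using that by (intro mult_pos_neg) auto
  define Cs where "Cs = cball (0::real^'n) R \<inter> {x. rr J x \<le> q}"
  have cCs: "compact Cs" unfolding Cs_def
    by (intro compact_Int_closed compact_cball closed_Collect_le continuous_intros)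
  have x0C: "x0 \<in> Cs" using x0(1) q r0_def unfolding Cs_def by auto
  have u0C: "u0 x > 0" if "x \<in> Cs" for x
  proof (cases "x \<in> ball 0 R")
    case True then show ?thesis using u0p by force
  next
    case False then have xs: "x \<in> sphere 0 R" using that unfolding Cs_def by auto
    have "x \<bullet> prj (-J) x = R^2 - rr J x" using rr_split[of x J] xx_sphere[OF xs] by simp
    moreover have "rr J x \<le> q" using that unfolding Cs_def by auto
    ultimately have "x \<bullet> prj (-J) x > 0" using q by simp
    then show ?thesis using u0s xs by (simp add: norm_out_eq)
  qed
  have cu0C: "continuous_on Cs u0" using cu0 by (rule continuous_on_subset) (auto simp: Cs_def)
  obtain xm where xm: "xm \<in> Cs" "\<And>y. y \<in> Cs \<Longrightarrow> u0 xm \<le> u0 y"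
    using continuous_attains_inf[OF cCs _ cu0C] x0C by blast
  define \<delta>0 where "\<delta>0 = u0 xm"
  have d0: "\<delta>0 > 0" unfolding \<delta>0_def using u0C[OF xm(1)] .
  define s1 where "s1 = sqrt (R^2 - q)"
  have s1: "s1 > 0" unfolding s1_def using q by simp
  define K where "K = min \<delta>0 s1 / (3*q^2)"
  have K: "K > 0" "K * (3*q^2) = min \<delta>0 s1" unfolding K_def using d0 s1 q by auto
  have KP: "K * P r \<le> min \<delta>0 s1" "K * P r \<ge> 0" if "0 \<le> r" "r \<le> q" for r
  proof -
    have "K * P r \<le> K * (3*q^2)" using Ple[OF that] K by (intro mult_left_mono) auto
    then show "K * P r \<le> min \<delta>0 s1" using K by simp
    show "K * P r \<ge> 0" using Ple[OF that] K by simp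
  qed
  have psi_eq: "psib K \<mu> q J (x,t) = K * exp (-\<mu> * t) * P (rr J x)" for x t
    unfolding psib_def P_def by simp
  have rrR: "rr J x \<le> R^2" if "x \<in> cball 0 R" for x
  proof -
    have "x \<bullet> x \<le> R^2" using that by (simp add: dot_square_norm power_mono)
    then show ?thesis using rr_split[of x J] prjq_nonneg[of x "-J"] by linarith
  qed
  have comp: "\<forall>x\<in>cball 0 R. \<forall>t\<ge>0. psib K \<mu> q J (x,t) \<le> u (x,t)"
  proof (rule par_comp[OF sol cu barrier_C21])
    show "\<forall>x\<in>cball 0 R. psib K \<mu> q J (x, 0) \<le> u (x, 0)"
    proof
      fix x assume x: "x \<in> cball (0::real^'n) R"
      show "psib K \<mu> q J (x, 0) \<le> u (x, 0)"
      proof (cases "rr J x \<le> q")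
        case True
        then have "x \<in> Cs" using x unfolding Cs_def by auto
        then have "\<delta>0 \<le> u0 x" using xm(2) unfolding \<delta>0_def by blast
        moreover have "K * P (rr J x) \<le> \<delta>0" using KP(1)[OF rr_nonneg True] by simp
        ultimately show ?thesis using b0 x psi_eq by simp
      next
        case False
        have "P (rr J x) < 0" using Pneg[of "rr J x"] False rrR[OF x] q by simp
        then have "K * P (rr J x) \<le> 0" using K by (simp add: mult_pos_neg less_imp_le)
        then show ?thesis using b0 x psi_eq u0nn[OF x] by simp
      qed
    qed
    show "\<forall>x\<in>sphere 0 R. \<forall>t>0. psib K \<mu> q J (x, t) \<le> u (x, t)"
    proof (intro ballI allI impI)
      fix x t assume xs: "x \<in> sphere (0::real^'n) R" and t: "t > (0::real)"
      have xc: "x \<in> cball 0 R" using xs by auto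
      have ux: "u (x,t) = sqrt (x \<bullet> prj (-J) x)" using bs xs t by (simp add: norm_out_eq)
      have xp: "x \<bullet> prj (-J) x = R^2 - rr J x" using rr_split[of x J] xx_sphere[OF xs] by simp
      have e1: "exp (-\<mu> * t) \<le> 1" "exp (-\<mu> * t) > 0" using t q unfolding \<mu>_def by auto
      show "psib K \<mu> q J (x, t) \<le> u (x, t)"
      proof (cases "rr J x \<le> q")
        case True
        have a: "0 \<le> K * P (rr J x)" "K * P (rr J x) \<le> s1" using KP[OF rr_nonneg True] by auto
        have "K * exp (-\<mu> * t) * P (rr J x) = exp (-\<mu> * t) * (K * P (rr J x))" by simp
        also have "\<dots> \<le> 1 * (K * P (rr J x))" using e1 a by (intro mult_right_mono) auto
        also have "\<dots> \<le> s1" using a by simp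
        also have "s1 \<le> sqrt (x \<bullet> prj (-J) x)" unfolding s1_def xp using True by simp
        finally show ?thesis using psi_eq ux by simp
      next
        case False
        have "P (rr J x) < 0" using Pneg[of "rr J x"] False rrR[OF xc] q by simp
        then have "K * exp (-\<mu> * t) * P (rr J x) \<le> 0" using K e1
          by (simp add: mult_pos_neg less_imp_le)
        moreover have "0 \<le> sqrt (x \<bullet> prj (-J) x)" using prjq_nonneg by simp
        ultimately show ?thesis using psi_eq[of x t] ux by linarith
      qed
    qed
    show "\<forall>x\<in>ball 0 R. \<forall>t>0. u (x, t) < psib K \<mu> q J (x, t) \<longrightarrow>
        Tb K \<mu> q J (x, t) - eig_j (card J) (Hb K \<mu> q J (x, t)) \<le> 0"
    proof (intro ballI allI impI)
      fix x t assume xb: "x \<in> ball (0::real^'n) R" and t: "t > (0::real)"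
        and lt: "u (x, t) < psib K \<mu> q J (x, t)"
      have xc: "x \<in> cball 0 R" using xb by auto
      define c where "c = K * exp (-\<mu> * t)"
      have c: "c > 0" unfolding c_def using K by simp
      define r where "r = rr J x"
      have "0 \<le> u (x,t)" using unn xc t by simp
      then have "psib K \<mu> q J (x,t) > 0" using lt by linarith
      moreover have "psib K \<mu> q J (x,t) = c * P r" using psi_eq unfolding c_def r_def by simp
      ultimately have "c * P r > 0" by simp
      then have Pp: "P r > 0" using c by (simp add: zero_less_mult_iff)
      have "r < R^2"
      proof -
        have "x \<bullet> x < R^2" by (rule xx_ball[OF xb])
        then show ?thesis using rr_split[of x J] prjq_nonneg[of x "-J"] unfolding r_def by linarith
      qed
      then have r3: "r < 3*q" using q by linarith
      have rq: "r < q"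
      proof (rule ccontr)
        assume "\<not> r < q"
        then have "r - q \<ge> 0" "r - 3*q < 0" using r3 by auto
        then have "P r \<le> 0" unfolding P_def by (simp add: mult_nonneg_nonpos)
        then show False using Pp by simp
      qed
      define y where "y = prj J x"
      have yy: "y \<bullet> y = r" unfolding y_def r_def rr_def by (simp add: prj_sq power2_norm_eq_inner)
      have Hb_eq: "Hb K \<mu> q J (x, t) = Mt (8*c) y (c*(4*(y \<bullet> y) - 8*q)) J 0"
      proof -
        have yy': "prj J x \<bullet> prj J x = rr J x" using yy unfolding y_def r_def .
        show ?thesis unfolding Hb_def c_def y_def yy' by (simp add: mult.assoc)
      qed
      have eig: "eig_j (card J) (Hb K \<mu> q J (x, t)) \<ge> c * min (12*(y \<bullet> y) - 8*q) 0"
        unfolding Hb_eq by (rule eig_barrier[OF j1 jN c]) (simp add: y_def)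
      have Tb_eq: "Tb K \<mu> q J (x, t) = c * (-(12/q) * P r)"
        unfolding Tb_def psi_eq c_def r_def by (simp add: \<mu>_def)
      have "-(12/q) * P r \<le> min (12*r - 8*q) 0"
        unfolding P_def by (rule arith_barrier[OF q(1) rq])
      then have "c * (-(12/q) * P r) \<le> c * min (12*r - 8*q) 0" using c by (intro mult_left_mono) auto
      then show "Tb K \<mu> q J (x, t) - eig_j (card J) (Hb K \<mu> q J (x, t)) \<le> 0"
        using eig Tb_eq yy by simp
    qed
  qed
  have "psib K \<mu> q J (x0,t0) > 0"
  proof -
    have "P r0 > 0" unfolding P_def using q by (intro mult_neg_neg) auto
    then show ?thesis using psi_eq K r0_def by simp
  qed
  moreover have "psib K \<mu> q J (x0,t0) \<le> u (x0,t0)" using comp x0(1) t0 by auto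
  ultimately show ?thesis by linarith
qed


theorem mainTheorem14:
  fixes J :: "'n::finite set" and j :: nat and R :: real
    and u0 z :: "real^'n \<Rightarrow> real" and u :: "(real^'n) \<times> real \<Rightarrow> real"
  assumes "1 \<le> j" and "j \<le> CARD('n) - 1" and "card J = j"
    and "R > 0"
    and "continuous_on (cball 0 R) u0"
    and "\<forall>x\<in>ball 0 R. u0 x > 0"
    and "\<forall>x\<in>sphere 0 R. u0 x = norm_out J x"
    and "visc_sol_ell j (ball 0 R) z"
    and "continuous_on (cball 0 R) z"
    and "\<forall>x\<in>sphere 0 R. z x = norm_out J x"
    and "visc_sol_par j (ball 0 R \<times> {0<..}) u"
    and "continuous_on (cball 0 R \<times> {0..}) u"
    and "\<forall>x\<in>sphere 0 R. \<forall>t>0. u (x, t) = norm_out J x"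
    and "\<forall>x\<in>cball 0 R. u (x, 0) = u0 x"
  shows "(\<forall>x\<in>ball 0 R. norm_out J x = 0 \<longrightarrow> z x = 0) \<and>
         (\<forall>x0\<in>ball 0 R. norm_out J x0 = 0 \<longrightarrow> (\<forall>t>0. u (x0, t) > 0 \<and> 0 = z x0))"
proof -
  have j1: "1 \<le> card J" using assms(1,3) by simp
  have jN: "card J \<le> CARD('n)" using assms(2,3) by linarith
  have jN': "j \<le> CARD('n)" using assms(2) by linarith
  have solz: "visc_sol_ell (card J) (ball 0 R) z" using assms(8,3) by simp
  have solu: "visc_sol_par (card J) (ball 0 R \<times> {0<..}) u" using assms(11,3) by simp
  have znn: "\<forall>x\<in>cball 0 R. z x \<ge> 0"
    by (rule z_nonneg[OF assms(4,1) jN' assms(8,9,10)])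
  have zz: "z x = 0" if "x \<in> ball 0 R" "norm_out J x = 0" for x
  proof -
    have "z x \<le> 0" by (rule z_le0[OF assms(4) j1 solz assms(9,10) that])
    moreover have "z x \<ge> 0" using znn that(1) by auto
    ultimately show ?thesis by simp
  qed
  have u0nn: "\<forall>x\<in>cball 0 R. u (x,0) \<ge> 0"
  proof
    fix x assume x: "x \<in> cball (0::real^'n) R"
    show "u (x,0) \<ge> 0"
    proof (cases "x \<in> ball 0 R")
      case True then show ?thesis using assms(6,14) x by (metis less_imp_le)
    next
      case False then have "x \<in> sphere 0 R" using x by auto
      then show ?thesis using assms(7,14) x by (simp add: norm_out_eq prjq_nonneg)
    qed
  qed
  have unn0: "\<forall>x\<in>cball 0 R. \<forall>t\<ge>0. psib 0 1 1 J (x,t) \<le> u (x,t)"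
    by (rule u_nonneg[OF j1 jN solu assms(12) u0nn assms(13)])
  have unn: "\<forall>x\<in>cball 0 R. \<forall>t\<ge>0. 0 \<le> u (x,t)"
    using unn0 by (simp add: psib_def)
  have up: "u (x0, t) > 0" if "x0 \<in> ball 0 R" "norm_out J x0 = 0" "t > 0" for x0 t
    by (rule u_pos[OF j1 jN assms(4) solu assms(12,5,6,7,13,14) unn that])
  show ?thesis using zz up by auto
qed

end
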